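(* Consider the delay differential system \[ \begin{aligned} \dot T(t)&= s-dT(t)+aT(t)\Big(1-\frac{T(t)+I(t)}{T_{\max}}\Big)-\frac{bT(t)V(t)}{1+\alpha V(t)},\\ \dot I(t)&= \frac{bT(t-\tau)V(t-\tau)}{1+\alpha V(t-\tau)}+aI(t)\Big(1-\frac{T(t)+I(t)}{T_{\max}}\Big)-\mu I(t),\\ \dot V(t)&= pI(t)-cV(t), \end{aligned} \] with positive constants $s,d,a,T_{\max},b,\alpha,\mu,p,c$ satisfying $d\le\mu$, and $\tau\ge0$. Let \[ T_0=\frac{T_{\max}}{2a}\Big(a-d+\sqrt{(a-d)^2+\tfrac{4as}{T_{\max}}}\Big),\qquad R_0=\frac{1}{\mu}\Big[\frac{bpT_0}{c}+a\Big(1-\frac{T_0}{T_{\max}}\Big)\Big]. \] If $R_0>1$, then the system is permanent.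
   Context: The system is permanent if it is dissipative (all solutions with positive initial data are ultimately bounded by a constant independent of the initial data) and uniformly persistent: there is $\eta>0$, independent of the initial data, such that every solution with positive continuous initial data on $[-\tau,0]$ satisfies $\liminf_{t\to\infty}T(t)\ge\eta$, $\liminf_{t\to\infty}I(t)\ge\eta$, $\liminf_{t\to\infty}V(t)\ge\eta$. *)

theory Defs
  imports "HOL-Analysis.Analysis" "HOL-Library.Liminf_Limsup"
begin

definition is_solution ::
  "real \<Rightarrow> real \<Rightarrow> real \<Rightarrow> real \<Rightarrow> real \<Rightarrow> real \<Rightarrow> real \<Rightarrow> real \<Rightarrow> real \<Rightarrow> real
   \<Rightarrow> (real \<Rightarrow> real) \<Rightarrow> (real \<Rightarrow> real) \<Rightarrow> (real \<Rightarrow> real) \<Rightarrow> bool" where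
  "is_solution s d a Tmax b \<alpha> \<mu> p c \<tau> T I V \<longleftrightarrow>
     continuous_on {-\<tau>..} T \<and> continuous_on {-\<tau>..} I \<and> continuous_on {-\<tau>..} V \<and>
     (\<forall>t\<in>{-\<tau>..0}. T t > 0 \<and> I t > 0 \<and> V t > 0) \<and>
     (\<forall>t\<ge>0.
        (T has_real_derivative
           (s - d * T t + a * T t * (1 - (T t + I t) / Tmax) - b * T t * V t / (1 + \<alpha> * V t)))
           (at t within {0..}) \<and>
        (I has_real_derivative
           (b * T (t - \<tau>) * V (t - \<tau>) / (1 + \<alpha> * V (t - \<tau>))
             + a * I t * (1 - (T t + I t) / Tmax) - \<mu> * I t))
           (at t within {0..}) \<and>
        (V has_real_derivative (p * I t - c * V t)) (at t within {0..}))"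

definition T0_of :: "real \<Rightarrow> real \<Rightarrow> real \<Rightarrow> real \<Rightarrow> real" where
  "T0_of s d a Tmax = Tmax / (2 * a) * (a - d + sqrt ((a - d)^2 + 4 * a * s / Tmax))"

definition R0_of :: "real \<Rightarrow> real \<Rightarrow> real \<Rightarrow> real \<Rightarrow> real \<Rightarrow> real \<Rightarrow> real \<Rightarrow> real \<Rightarrow> real" where
  "R0_of s d a Tmax b \<mu> p c =
     (1 / \<mu>) * (b * p * T0_of s d a Tmax / c + a * (1 - T0_of s d a Tmax / Tmax))"

definition permanent ::
  "real \<Rightarrow> real \<Rightarrow> real \<Rightarrow> real \<Rightarrow> real \<Rightarrow> real \<Rightarrow> real \<Rightarrow> real \<Rightarrow> real \<Rightarrow> real \<Rightarrow> bool" where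
  "permanent s d a Tmax b \<alpha> \<mu> p c \<tau> \<longleftrightarrow>
     (\<exists>M. \<forall>T I V. is_solution s d a Tmax b \<alpha> \<mu> p c \<tau> T I V \<longrightarrow>
         (\<forall>\<^sub>F t in at_top. T t \<le> M \<and> I t \<le> M \<and> V t \<le> M)) \<and>
     (\<exists>\<eta>>0. \<forall>T I V. is_solution s d a Tmax b \<alpha> \<mu> p c \<tau> T I V \<longrightarrow>
         Liminf at_top (\<lambda>t. ereal (T t)) \<ge> ereal \<eta> \<and>
         Liminf at_top (\<lambda>t. ereal (I t)) \<ge> ereal \<eta> \<and>
         Liminf at_top (\<lambda>t. ereal (V t)) \<ge> ereal \<eta>)"

end

theory Submission
  imports Defs
begin


lemma deriv_cont:
  assumes "\<And>t. t \<in> {u..v} \<Longrightarrow> (x has_real_derivative x' t) (at t)"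
  shows "continuous_on {u..v} x"
  by (meson DERIV_isCont assms continuous_at_imp_continuous_on)

lemma incr_lemma:
  fixes x :: "real \<Rightarrow> real"
  assumes "u \<le> v" "continuous_on {u..v} x"
    and "\<And>t. u < t \<Longrightarrow> t < v \<Longrightarrow> (x has_real_derivative x' t) (at t)"
    and "\<And>t. u < t \<Longrightarrow> t < v \<Longrightarrow> x' t \<ge> 0"
  shows "x u \<le> x v"
  by (rule DERIV_nonneg_imp_increasing_open[OF assms(1) _ assms(2)]) (use assms in blast)

lemma decr_lemma:
  fixes x :: "real \<Rightarrow> real"
  assumes "u \<le> v" "continuous_on {u..v} x"
    and "\<And>t. u < t \<Longrightarrow> t < v \<Longrightarrow> (x has_real_derivative x' t) (at t)"
    and "\<And>t. u < t \<Longrightarrow> t < v \<Longrightarrow> x' t \<le> 0"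
  shows "x v \<le> x u"
  by (rule DERIV_nonpos_imp_decreasing_open[OF assms(1) _ assms(2)]) (use assms in blast)

lemma exp_lb:
  fixes x :: "real \<Rightarrow> real"
  assumes "u \<le> v" "continuous_on {u..v} x"
    and "\<And>t. u < t \<Longrightarrow> t < v \<Longrightarrow> (x has_real_derivative x' t) (at t)"
    and "\<And>t. u < t \<Longrightarrow> t < v \<Longrightarrow> x' t \<ge> r * x t"
  shows "x v \<ge> x u * exp (r * (v - u))"
proof -
  let ?y = "\<lambda>t. x t * exp (- r * t)"
  have "?y u \<le> ?y v"
  proof (rule incr_lemma[OF assms(1), where x' = "\<lambda>t. exp (- r * t) * (x' t - r * x t)"])
    show "continuous_on {u..v} ?y"
      by (intro continuous_intros assms(2))
    fix t assume t: "u < t" "t < v"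
    have "(?y has_real_derivative (x' t * exp (- r * t) + x t * (exp (- r * t) * (- r * 1)))) (at t)"
      using assms(3)[OF t] by (auto intro!: derivative_eq_intros)
    then show "(?y has_real_derivative exp (- r * t) * (x' t - r * x t)) (at t)"
      by (simp add: algebra_simps)
    show "exp (- r * t) * (x' t - r * x t) \<ge> 0"
      using assms(4)[OF t] by simp
  qed
  then have "x u * exp (- r * u) * exp (r * v) \<le> x v * exp (- r * v) * exp (r * v)"
    by simp
  then show ?thesis
    by (simp add: mult.assoc exp_add[symmetric] algebra_simps)
qed

lemma stays_below:
  fixes x :: "real \<Rightarrow> real"
  assumes "u \<le> v" "continuous_on {u..v} x"
    and "\<And>t. u < t \<Longrightarrow> t < v \<Longrightarrow> (x has_real_derivative x' t) (at t)"
    and "\<And>t. u < t \<Longrightarrow> t < v \<Longrightarrow> x t > K \<Longrightarrow> x' t \<le> 0"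
    and "x u \<le> K"
    and "w \<in> {u..v}"
  shows "x w \<le> K"
proof (rule ccontr)
  assume nw: "\<not> x w \<le> K"
  define S where "S = {u..w} \<inter> x -` {..K}"
  have cw: "continuous_on {u..w} x"
    using assms(2,6) continuous_on_subset by fastforce
  have "closed S" unfolding S_def
    by (rule continuous_closed_preimage[OF cw]) auto
  moreover have "u \<in> S" using assms(5,6) by (auto simp: S_def)
  moreover have "bdd_above S" unfolding S_def by auto
  ultimately have sS: "Sup S \<in> S" using closed_contains_Sup by blast
  define z where "z = Sup S"
  have zS: "z \<in> S" using sS z_def by simp
  then have zw: "z \<le> w" "u \<le> z" "x z \<le> K" by (auto simp: S_def)
  have zlt: "z < w" using zw nw by (metis order.order_iff_strict)
  have above: "x t > K" if "z < t" "t \<le> w" for t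
  proof (rule ccontr)
    assume "\<not> x t > K"
    then have "t \<in> S" using that zw by (auto simp: S_def)
    then have "t \<le> z" unfolding z_def using \<open>bdd_above S\<close> by (simp add: cSup_upper)
    then show False using that by simp
  qed
  have "x w \<le> x z"
  proof (rule decr_lemma[where x=x and u=z and v=w and x'=x'])
    show "z \<le> w" using zw by simp
    show "continuous_on {z..w} x" using cw zw continuous_on_subset by fastforce
    fix t assume t: "z < t" "t < w"
    then show "(x has_real_derivative x' t) (at t)" using assms(3) zw assms(6) by auto
    show "x' t \<le> 0" using assms(4) above t zw assms(6) by auto
  qed
  then show False using zw nw by simp
qed

lemma reach_below:
  fixes x :: "real \<Rightarrow> real"
  assumes "u \<le> v" "continuous_on {u..v} x"
    and "\<And>t. u < t \<Longrightarrow> t < v \<Longrightarrow> (x has_real_derivative x' t) (at t)"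
    and "\<And>t. u < t \<Longrightarrow> t < v \<Longrightarrow> x t \<ge> K \<Longrightarrow> x' t \<le> - \<delta>"
    and "\<delta> > 0" "x u \<le> B"
    and "w \<in> {u + max 0 ((B - K) / \<delta>)..v}"
  shows "x w \<le> K"
proof -
  define e where "e = u + max 0 ((B - K) / \<delta>)"
  have ue: "u \<le> e" "e \<le> v" using assms(7) by (auto simp: e_def)
  have "\<exists>r\<in>{u..e}. x r \<le> K"
  proof (cases "B \<le> K")
    case True then show ?thesis using assms(6) ue by force
  next
    case False
    have "(B - K) / \<delta> > 0" using False assms(5) by simp
    then have e': "e = u + (B - K) / \<delta>" by (simp add: e_def)
    show ?thesis
    proof (rule ccontr)
      assume "\<not> ?thesis"
      then have gt: "\<And>r. r \<in> {u..e} \<Longrightarrow> x r > K" by force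
      have "x e + \<delta> * e \<le> x u + \<delta> * u"
      proof (rule decr_lemma[where x' = "\<lambda>t. x' t + \<delta>" and x = "\<lambda>t. x t + \<delta> * t", OF ue(1)])
        show "continuous_on {u..e} (\<lambda>t. x t + \<delta> * t)"
          using assms(2) ue continuous_on_subset[of "{u..v}" x "{u..e}"]
          by (intro continuous_intros) auto
        fix t assume t: "u < t" "t < e"
        show "((\<lambda>t. x t + \<delta> * t) has_real_derivative x' t + \<delta>) (at t)"
          using assms(3)[of t] t ue by (auto intro!: derivative_eq_intros)
        show "x' t + \<delta> \<le> 0" using assms(4)[of t] gt[of t] t ue by auto
      qed
      then have "x e \<le> B - \<delta> * (e - u)" using assms(6) by (simp add: algebra_simps)
      also have "\<delta> * (e - u) = B - K" using e' assms(5) by simp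
      finally have "x e \<le> K" by simp
      then show False using gt[of e] ue by auto
    qed
  qed
  then obtain r where r: "r \<in> {u..e}" "x r \<le> K" by blast
  show ?thesis
  proof (rule stays_below[where x = x and K = K and u = r and v = v and x' = x'])
    show "r \<le> v" using r ue by simp
    show "continuous_on {r..v} x" using assms(2) r continuous_on_subset by fastforce
    fix t assume t: "r < t" "t < v"
    then show "(x has_real_derivative x' t) (at t)" using assms(3) r by auto
    show "K < x t \<Longrightarrow> x' t \<le> 0" using assms(4)[of t] t r assms(5) by auto
  next
    show "x r \<le> K" by fact
    show "w \<in> {r..v}" using assms(7) r by (auto simp: e_def)
  qed
qed

lemma reach_above:
  fixes x :: "real \<Rightarrow> real"
  assumes "u \<le> v" "continuous_on {u..v} x"
    and "\<And>t. u < t \<Longrightarrow> t < v \<Longrightarrow> (x has_real_derivative x' t) (at t)"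
    and "\<And>t. u < t \<Longrightarrow> t < v \<Longrightarrow> x t \<le> K \<Longrightarrow> x' t \<ge> \<delta>"
    and "\<delta> > 0" "x u \<ge> B"
    and "w \<in> {u + max 0 ((K - B) / \<delta>)..v}"
  shows "x w \<ge> K"
proof -
  have "- x w \<le> - K"
  proof (rule reach_below[where x = "\<lambda>t. - x t" and x' = "\<lambda>t. - x' t" and B = "- B" and \<delta> = \<delta>, OF assms(1)])
    show "continuous_on {u..v} (\<lambda>t. - x t)" using assms(2) by (intro continuous_intros)
    fix t assume t: "u < t" "t < v"
    show "((\<lambda>t. - x t) has_real_derivative - x' t) (at t)" using assms(3)[OF t] by (rule DERIV_minus)
    show "- K \<le> - x t \<Longrightarrow> - x' t \<le> - \<delta>" using assms(4)[OF t] by auto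
  next
    show "\<delta> > 0" "- x u \<le> - B" using assms by auto
    show "w \<in> {u + max 0 ((- B - - K) / \<delta>)..v}" using assms(7) by simp
  qed
  then show ?thesis by simp
qed



lemma div_le_self_pos:
  fixes x y :: real
  assumes "0 \<le> x" "1 \<le> y" shows "x / y \<le> x"
  using assms by (simp add: divide_le_eq mult_le_cancel_left1 mult_le_cancel_right2 mult.commute)

lemma F_le_lin:
  fixes b T V \<alpha> :: real
  assumes "b > 0" "T \<ge> 0" "V \<ge> 0" "\<alpha> > 0"
  shows "b * T * V / (1 + \<alpha> * V) \<le> b * T * V"
  using assms by (intro div_le_self_pos) auto

lemma F_le_sat:
  fixes b T V \<alpha> :: real
  assumes "b > 0" "T \<ge> 0" "V \<ge> 0" "\<alpha> > 0"
  shows "b * T * V / (1 + \<alpha> * V) \<le> b * T / \<alpha>"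
proof -
  have "b * T * V * \<alpha> \<le> b * T * (1 + \<alpha> * V)"
    using assms by (simp add: algebra_simps)
  then show ?thesis using assms by (simp add: divide_le_eq le_divide_eq add_pos_nonneg algebra_simps)
qed

lemma F_nonneg:
  fixes b T V \<alpha> :: real
  assumes "b > 0" "T \<ge> 0" "V \<ge> 0" "\<alpha> > 0"
  shows "b * T * V / (1 + \<alpha> * V) \<ge> 0"
  using assms by (simp add: add_pos_nonneg)



lemma within_to_at:
  assumes "(f has_real_derivative y) (at t within {0..})" "t > 0"
  shows "(f has_real_derivative y) (at t)"
proof -
  have "(f has_real_derivative y) (at t within {0<..})"
    using assms(1) by (rule has_field_derivative_subset) auto
  then show ?thesis using at_within_open[of t "{0<..}"] assms(2) by simp
qed

lemma deriv_integral_at: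
  fixes g :: "real \<Rightarrow> real"
  assumes "continuous_on {a0..} g" "a0 < t"
  shows "((\<lambda>u. integral {a0..u} g) has_real_derivative g t) (at t)"
proof -
  have "continuous_on {a0..t+1} g" using assms(1) by (rule continuous_on_subset) auto
  then have "((\<lambda>u. integral {a0..u} g) has_real_derivative g t) (at t within {a0..t+1})"
    using assms(2) by (intro integral_has_real_derivative) auto
  then have "((\<lambda>u. integral {a0..u} g) has_real_derivative g t) (at t within {a0<..<t+1})"
    by (rule has_field_derivative_subset) auto
  then show ?thesis using at_within_open[of t "{a0<..<t+1}"] assms(2) by simp
qed

lemma pos_mult_exp: "0 < (y::real) \<Longrightarrow> y * exp r \<le> x \<Longrightarrow> 0 < x"
  by (smt (verit) exp_gt_zero mult_pos_pos)

lemma Tlb_alg: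
  fixes s d a Tmax b \<alpha> T I V B :: real
  assumes "s > 0" "d > 0" "a > 0" "Tmax > 0" "b > 0" "\<alpha> > 0" "B > 0"
    and "T > 0" "I > 0" "V > 0" "T \<le> B" "I \<le> B" "V \<le> B"
  shows "s - d * T + a * T * (1 - (T + I) / Tmax) - b * T * V / (1 + \<alpha> * V)
     \<ge> - (d + 2 * a * B / Tmax + b * B) * T"
proof -
  have "b * T * V \<le> b * T * B" using assms by (intro mult_left_mono) auto
  moreover have "b * T * B = b * B * T" by simp
  ultimately have 1: "b * T * V / (1 + \<alpha> * V) \<le> b * B * T"
    using F_le_lin[of b T V \<alpha>] assms by linarith
  have "(T + I) / Tmax \<le> 2 * B / Tmax" using assms by (simp add: divide_right_mono)
  then have 2: "a * T * ((T + I) / Tmax) \<le> a * T * (2 * B / Tmax)"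
    using assms by (intro mult_left_mono) auto
  have e1: "a * T * (1 - (T + I) / Tmax) = a * T - a * T * ((T + I) / Tmax)" by (simp add: algebra_simps)
  have e2: "a * T * (2 * B / Tmax) = 2 * a * B / Tmax * T" by simp
  have e3: "- (d + 2 * a * B / Tmax + b * B) * T = - (d * T) - 2 * a * B / Tmax * T - b * B * T"
    by (simp add: algebra_simps)
  have "a * T > 0" using assms by simp
  show ?thesis unfolding e3 using 1 2 e1 e2 assms \<open>a * T > 0\<close> by linarith
qed

lemma Ilb_alg:
  fixes a Tmax \<mu> T I V B f :: real
  assumes "a > 0" "Tmax > 0" "f \<ge> 0"
    and "T > 0" "I > 0" "V > 0" "T \<le> B" "I \<le> B" "V \<le> B"
  shows "f + a * I * (1 - (T + I) / Tmax) - \<mu> * I \<ge> - (\<mu> + 2 * a * B / Tmax) * I"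
proof -
  have "(T + I) / Tmax \<le> 2 * B / Tmax" using assms by (simp add: divide_right_mono)
  then have 2: "a * I * ((T + I) / Tmax) \<le> a * I * (2 * B / Tmax)"
    using assms by (intro mult_left_mono) auto
  have e1: "a * I * (1 - (T + I) / Tmax) = a * I - a * I * ((T + I) / Tmax)" by (simp add: algebra_simps)
  have e2: "a * I * (2 * B / Tmax) = 2 * a * B / Tmax * I" by simp
  have e3: "- (\<mu> + 2 * a * B / Tmax) * I = - (\<mu> * I) - 2 * a * B / Tmax * I"
    by (simp add: algebra_simps)
  have "a * I > 0" using assms by simp
  show ?thesis unfolding e3 using 2 e1 e2 assms \<open>a * I > 0\<close> by linarith
qed

lemma l00: "(k::real) * (x + q) * (k * (x - q)) = k^2 * (x^2 - q^2)"
  by (simp add: algebra_simps power2_eq_square)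
lemma l0: "- (k::real) * (y - u) * (y - w) = - k * (y^2 - (u + w) * y + u * w)"
  by (simp add: algebra_simps power2_eq_square)
lemma l4: "(D::real) \<noteq> 0 \<Longrightarrow> B * V / D - (1 - x) * B / D * V = x * B / D * V"
  by (simp add: field_simps)
lemma l6: "(a::real) * X / Tm + b * X = X * (a / Tm + b)" by (simp add: algebra_simps)
lemma l7: "(T::real) \<noteq> 0 \<Longrightarrow> A \<noteq> 0 \<Longrightarrow> T * (s / (2 * T^2 * A) * x) * A = x * s / (2 * T)"
  by (simp add: field_simps power2_eq_square)
lemma l1: "- (k::real) * (y - u) * (y - w) = k * ((u - y) * (y - w))" by (simp add: algebra_simps)
lemma l2: "(s::real) - d*x + a*x*(1 - (x+y)/m) - f = s + (a-d)*x - a*x^2/m - a*x*y/m - f"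
  by (simp add: algebra_simps add_divide_distrib power2_eq_square diff_divide_distrib)

lemma I_up_alg:
  fixes a Tmax \<mu> T I f K :: real
  assumes "a > 0" "Tmax > 0" "f \<le> K" "K \<ge> 0" "T \<ge> 0" "I \<ge> Tmax + (K + 1) / a" "\<mu> > 0"
  shows "f + a * I * (1 - (T + I) / Tmax) - \<mu> * I \<le> -1"
proof -
  have KA: "(K + 1) / a > 0" using assms by simp
  then have IT: "I \<ge> Tmax" "I > 0" using assms by linarith+
  have "(T + I) / Tmax \<ge> I / Tmax" using assms by (simp add: divide_right_mono)
  then have h1: "a * I * (1 - (T + I) / Tmax) \<le> a * I * (1 - I / Tmax)"
    using IT assms by (intro mult_left_mono) auto
  have "I / Tmax \<ge> 1" using IT assms by simp
  then have neg: "a * (1 - I / Tmax) \<le> 0" using assms by (simp add: mult_nonneg_nonpos)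
  have "(a * (1 - I / Tmax)) * I \<le> (a * (1 - I / Tmax)) * Tmax"
    by (rule mult_left_mono_neg[OF IT(1) neg])
  moreover have "(a * (1 - I / Tmax)) * Tmax = a * (Tmax - I)" using assms by (simp add: field_simps)
  moreover have "a * (I - Tmax) \<ge> a * ((K + 1) / a)" using assms by (intro mult_left_mono) auto
  moreover have "a * ((K + 1) / a) = K + 1" using assms by simp
  moreover have "\<mu> * I > 0" using IT assms by simp
  ultimately show ?thesis using h1 assms by (simp add: algebra_simps)
qed

lemma T_low_alg:
  fixes s d a Tmax b \<alpha> T I f M G :: real
  assumes "s > 0" "d > 0" "a > 0" "Tmax > 0" "b > 0" "\<alpha> > 0"
    and "T > 0" "I \<ge> 0" "T \<le> M" "I \<le> M" "f \<le> b * T / \<alpha>"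
    and "G = d + 2 * a * M / Tmax + b / \<alpha>" "T \<le> s / (2 * G)"
  shows "s - d * T + a * T * (1 - (T + I) / Tmax) - f \<ge> s / 2"
proof -
  have "(T + I) / Tmax \<le> 2 * M / Tmax" using assms by (simp add: divide_right_mono)
  then have 2: "a * T * ((T + I) / Tmax) \<le> a * T * (2 * M / Tmax)"
    using assms by (intro mult_left_mono) auto
  have e1: "a * T * (1 - (T + I) / Tmax) = a * T - a * T * ((T + I) / Tmax)" by (simp add: algebra_simps)
  have e2: "a * T * (2 * M / Tmax) = 2 * a * M / Tmax * T" by simp
  have e3: "b * T / \<alpha> = b / \<alpha> * T" by simp
  have Gp: "G > 0" using assms by (simp add: add_pos_nonneg)
  have "T * G \<le> s / 2" using assms(13) Gp by (simp add: le_divide_eq algebra_simps)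
  moreover have "T * G = d * T + 2 * a * M / Tmax * T + b / \<alpha> * T" using assms(12) by (simp add: algebra_simps)
  moreover have "a * T > 0" using assms by simp
  ultimately show ?thesis using 2 e1 e2 e3 assms(11) by linarith
qed

locale hiv =
  fixes s d a Tmax b \<alpha> \<mu> p c \<tau> :: real
  assumes spos: "s > 0" and dpos: "d > 0" and apos: "a > 0" and Tmpos: "Tmax > 0"
    and bpos: "b > 0" and alpos: "\<alpha> > 0" and mupos: "\<mu> > 0" and ppos: "p > 0" and cpos: "c > 0"
    and dmu: "d \<le> \<mu>" and taupos: "\<tau> \<ge> 0"
    and R0: "R0_of s d a Tmax b \<mu> p c > 1"
begin

definition "F T V t = b * T t * V t / (1 + \<alpha> * V t)"
definition "DT T I V t = s - d * T t + a * T t * (1 - (T t + I t) / Tmax) - F T V t"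
definition "DI T I V t = F T V (t - \<tau>) + a * I t * (1 - (T t + I t) / Tmax) - \<mu> * I t"
definition "DV I V t = p * I t - c * V t"

context
  fixes T I V :: "real \<Rightarrow> real"
  assumes sol: "is_solution s d a Tmax b \<alpha> \<mu> p c \<tau> T I V"
begin


lemma contT: "continuous_on {-\<tau>..} T" and contI: "continuous_on {-\<tau>..} I"
  and contV: "continuous_on {-\<tau>..} V"
  using sol by (auto simp: is_solution_def)

lemma init: "t \<in> {-\<tau>..0} \<Longrightarrow> T t > 0 \<and> I t > 0 \<and> V t > 0"
  using sol by (auto simp: is_solution_def)

lemma derT: "t > 0 \<Longrightarrow> (T has_real_derivative DT T I V t) (at t)"
  and derI: "t > 0 \<Longrightarrow> (I has_real_derivative DI T I V t) (at t)"
  and derV: "t > 0 \<Longrightarrow> (V has_real_derivative DV I V t) (at t)"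
  using sol by (auto simp: is_solution_def DT_def DI_def DV_def F_def intro!: within_to_at)

lemma cont_sub: "u \<ge> -\<tau> \<Longrightarrow> continuous_on {u..v} T \<and> continuous_on {u..v} I \<and> continuous_on {u..v} V"
  using contT contI contV continuous_on_subset[of "{-\<tau>..}" _ "{u..v}"] by auto

lemma bound_on:
  fixes f :: "real \<Rightarrow> real"
  assumes "continuous_on {u..v} f"
  obtains B where "B > 0" "\<And>t. t \<in> {u..v} \<Longrightarrow> \<bar>f t\<bar> \<le> B"
proof -
  have "bounded (f ` {u..v})"
    by (intro compact_imp_bounded compact_continuous_image assms) auto
  then obtain B where "B > 0" "\<forall>x\<in>f ` {u..v}. norm x \<le> B" using bounded_pos by blast
  then show ?thesis using that by auto
qed

lemma pos_nonneg_time: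
  assumes t1: "t1 \<ge> 0" shows "T t1 > 0 \<and> I t1 > 0 \<and> V t1 > 0"
proof (rule ccontr)
  assume nt: "\<not> ?thesis"
  define m where "m t = min (T t) (min (I t) (V t))" for t
  have cm: "continuous_on {0..t1} m"
    unfolding m_def using cont_sub[of 0 t1] taupos by (intro continuous_intros) auto
  define S where "S = {0..t1} \<inter> m -` {..0}"
  have cS: "closed S" unfolding S_def by (rule continuous_closed_preimage[OF cm]) auto
  have t1S: "t1 \<in> S" using nt t1 by (auto simp: S_def m_def)
  have bS: "bdd_below S" by (auto simp: S_def)
  define z where "z = Inf S"
  have zS: "z \<in> S" unfolding z_def using closed_contains_Inf[OF _ bS cS] t1S by blast
  have z0: "0 \<le> z" "z \<le> t1" "m z \<le> 0" using zS by (auto simp: S_def)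
  have below: "T t > 0 \<and> I t > 0 \<and> V t > 0" if "-\<tau> \<le> t" "t < z" for t
  proof (cases "t \<le> 0")
    case True then show ?thesis using init that by auto
  next
    case False
    show ?thesis
    proof (rule ccontr)
      assume "\<not> ?thesis"
      then have "t \<in> S" using False that z0 by (auto simp: S_def m_def)
      then have "z \<le> t" unfolding z_def using bS by (simp add: cInf_lower)
      then show False using that by simp
    qed
  qed
  have "m 0 > 0" using init[of 0] taupos by (auto simp: m_def)
  then have zpos: "z > 0" using z0 by (metis order.not_eq_order_implies_strict not_le)
  have cz: "continuous_on {0..z} T" "continuous_on {0..z} I" "continuous_on {0..z} V"
    using cont_sub[of 0 z] taupos by auto
  obtain BT where BT: "BT > 0" "\<And>t. t \<in> {0..z} \<Longrightarrow> \<bar>T t\<bar> \<le> BT" using bound_on[OF cz(1)] by blast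
  obtain BI where BI: "BI > 0" "\<And>t. t \<in> {0..z} \<Longrightarrow> \<bar>I t\<bar> \<le> BI" using bound_on[OF cz(2)] by blast
  obtain BV where BV: "BV > 0" "\<And>t. t \<in> {0..z} \<Longrightarrow> \<bar>V t\<bar> \<le> BV" using bound_on[OF cz(3)] by blast
  define B where "B = max BT (max BI BV)"
  have Bb: "T t \<le> B" "I t \<le> B" "V t \<le> B" if "t \<in> {0..z}" for t
    using BT(2)[OF that] BI(2)[OF that] BV(2)[OF that] by (auto simp: B_def)
  have B0: "B > 0" using BT by (auto simp: B_def)
  have "T z \<ge> T 0 * exp (- (d + 2 * a * B / Tmax + b * B) * (z - 0))"
  proof (rule exp_lb[where x' = "DT T I V"])
    show "0 \<le> z" "continuous_on {0..z} T" using zpos cz by auto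
    fix t assume t: "0 < t" "t < z"
    show "(T has_real_derivative DT T I V t) (at t)" using derT t by simp
    have p: "T t > 0" "I t > 0" "V t > 0" using below[of t] t taupos by auto
    have b: "T t \<le> B" "I t \<le> B" "V t \<le> B" using Bb[of t] t by auto
    show "DT T I V t \<ge> - (d + 2 * a * B / Tmax + b * B) * T t"
      using Tlb_alg[OF spos dpos apos Tmpos bpos alpos B0 p b] by (simp add: DT_def F_def)
  qed
  moreover have "I z \<ge> I 0 * exp (- (\<mu> + 2 * a * B / Tmax) * (z - 0))"
  proof (rule exp_lb[where x' = "DI T I V"])
    show "0 \<le> z" "continuous_on {0..z} I" using zpos cz by auto
    fix t assume t: "0 < t" "t < z"
    show "(I has_real_derivative DI T I V t) (at t)" using derI t by simp
    have p: "T t > 0" "I t > 0" "V t > 0" using below[of t] t taupos by auto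
    have b: "T t \<le> B" "I t \<le> B" "V t \<le> B" using Bb[of t] t by auto
    have pd: "T (t - \<tau>) > 0" "V (t - \<tau>) > 0" using below[of "t - \<tau>"] t taupos by auto
    have "F T V (t - \<tau>) \<ge> 0" unfolding F_def using pd bpos alpos by (intro F_nonneg) auto
    then show "DI T I V t \<ge> - (\<mu> + 2 * a * B / Tmax) * I t"
      using Ilb_alg[OF apos Tmpos \<open>F T V (t - \<tau>) \<ge> 0\<close> p b] by (simp add: DI_def)
  qed
  moreover have "V z \<ge> V 0 * exp (- c * (z - 0))"
  proof (rule exp_lb[where x' = "DV I V"])
    show "0 \<le> z" "continuous_on {0..z} V" using zpos cz by auto
    fix t assume t: "0 < t" "t < z"
    show "(V has_real_derivative DV I V t) (at t)" using derV t by simp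
    have p: "T t > 0" "I t > 0" "V t > 0" using below[of t] t taupos by auto
    then show "DV I V t \<ge> - c * V t" using ppos by (simp add: DV_def)
  qed
  ultimately have "T z > 0" "I z > 0" "V z > 0"
    using init[of 0] taupos pos_mult_exp by auto
  then show False using z0 by (simp add: m_def)
qed

lemma pos: "t \<ge> -\<tau> \<Longrightarrow> T t > 0 \<and> I t > 0 \<and> V t > 0"
  using init pos_nonneg_time by (cases "t \<le> 0") auto

end

definition "T0 = T0_of s d a Tmax"
definition "T1 = Tmax / (2 * a) * (a - d - sqrt ((a - d)^2 + 4 * a * s / Tmax))"
definition "hq y = s + (a - d) * y - a * y^2 / Tmax"

lemma T0T1: "T0 > 0" "T1 < 0" "T0 * T1 = - s * Tmax / a" "T0 + T1 = Tmax * (a - d) / a"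
proof -
  define D where "D = (a-d)^2 + 4 * a * s / Tmax"
  define q where "q = sqrt D"
  have D: "D > (a-d)^2" using apos spos Tmpos by (simp add: D_def)
  have "D \<ge> 0" using D by (smt (verit) zero_le_power2)
  then have qq: "q^2 = D" unfolding q_def by simp
  have qpos: "q \<ge> 0" unfolding q_def using \<open>D \<ge> 0\<close> by simp
  have "\<bar>a - d\<bar> < q"
  proof -
    have "sqrt ((a-d)^2) < sqrt D" using D by (simp only: real_sqrt_less_iff)
    then show ?thesis by (simp add: q_def)
  qed
  then have q1: "a - d + q > 0" "a - d - q < 0" by auto
  have t0: "T0 = Tmax / (2*a) * (a - d + q)" by (simp add: T0_def T0_of_def q_def D_def)
  have t1: "T1 = Tmax / (2*a) * (a - d - q)" by (simp add: T1_def q_def D_def)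
  show "T0 > 0" using t0 q1 apos Tmpos by simp
  have "Tmax * (a - d - q) < 0" using q1 Tmpos by (simp add: mult_pos_neg)
  then show "T1 < 0" using t1 apos by (simp add: divide_neg_pos)
  have "T0 * T1 = (Tmax / (2*a))^2 * ((a-d)^2 - q^2)"
    unfolding t0 t1 by (rule l00)
  also have "\<dots> = - s * Tmax / a" using apos Tmpos unfolding qq D_def
    by (simp add: power2_eq_square field_simps)
  finally show "T0 * T1 = - s * Tmax / a" .
  show "T0 + T1 = Tmax * (a - d) / a" unfolding t0 t1 using apos
    by (simp add: field_simps)
qed

lemma hq_fact: "hq y = - (a / Tmax) * (y - T0) * (y - T1)"
proof -
  have "- (a / Tmax) * (y - T0) * (y - T1) = - (a / Tmax) * (y^2 - (T0 + T1) * y + T0 * T1)"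
    by (rule l0)
  also have "\<dots> = - (a / Tmax) * (y^2 - (Tmax*(a-d)/a) * y + (- s*Tmax/a))"
    by (simp only: T0T1(3,4))
  also have "\<dots> = hq y" unfolding hq_def using apos Tmpos
    by (simp add: field_simps power2_eq_square)
  finally show ?thesis by simp
qed

lemma hq_upper: assumes "x \<ge> 0" "y \<ge> T0 + x" shows "hq y \<le> - (a / Tmax) * x * T0"
proof -
  have "(y - T0) * (y - T1) \<ge> x * T0"
    using T0T1(1,2) assms by (intro mult_mono) auto
  then have "(a / Tmax) * (x * T0) \<le> (a / Tmax) * ((y - T0) * (y - T1))"
    using apos Tmpos by (intro mult_left_mono) auto
  moreover have "hq y = - ((a / Tmax) * ((y - T0) * (y - T1)))" unfolding hq_fact by simp
  moreover have "- (a / Tmax) * x * T0 = - ((a / Tmax) * (x * T0))" by simp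
  ultimately show ?thesis by linarith
qed

lemma hq_lower: assumes "x \<ge> 0" "0 \<le> y" "y \<le> T0 - x" shows "hq y \<ge> x * s / T0"
proof -
  have mT1: "- T1 = s * Tmax / (a * T0)" using T0T1(1,3) apos by (simp add: field_simps)
  have "(T0 - y) * (y - T1) \<ge> x * (- T1)"
    using T0T1(1,2) assms by (intro mult_mono) auto
  then have "(a / Tmax) * (x * (- T1)) \<le> (a / Tmax) * ((T0 - y) * (y - T1))"
    using apos Tmpos by (intro mult_left_mono) auto
  moreover have "(a / Tmax) * (x * (- T1)) = x * s / T0" unfolding mT1
    using apos Tmpos T0T1(1) by (simp add: field_simps)
  moreover have "hq y = (a / Tmax) * ((T0 - y) * (y - T1))" unfolding hq_fact by (rule l1)
  ultimately show ?thesis by simp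
qed

definition "MT = T0 + 1"
definition "KI = Tmax + (b * MT / \<alpha> + 1) / a"
definition "KV = (p * KI + 1) / c"
definition "M = max MT (max KI KV)"

lemma MT_pos: "MT > 0" using T0T1 by (simp add: MT_def)
lemma KI_pos: "KI > 0" using MT_pos bpos alpos apos Tmpos by (simp add: KI_def add_pos_pos)
lemma M_ge: "MT \<le> M" "KI \<le> M" "KV \<le> M" "M > 0" using MT_pos by (auto simp: M_def)


definition "\<Delta> = b * p * T0 / c + a * (1 - T0 / Tmax) - \<mu>"

lemma \<Delta>_pos: "\<Delta> > 0"
proof -
  have "(1 / \<mu>) * (b * p * T0 / c + a * (1 - T0 / Tmax)) > 1"
    using R0 by (simp add: R0_of_def T0_def)
  then have "b * p * T0 / c + a * (1 - T0 / Tmax) > \<mu>" using mupos by (simp add: field_simps)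
  then show ?thesis by (simp add: \<Delta>_def)
qed

definition "\<theta> = s / (2 * T0^2 * (a / Tmax + b))"
definition "gfun y = a * (1 - (T0 + y + \<theta> * y) / Tmax) - \<mu> + p * ((1 - y) * b * (T0 - y) / (c * (1 + \<alpha> * (\<theta> * y))))"

lemma \<theta>_pos: "\<theta> > 0"
proof -
  have "a / Tmax + b > 0" using apos Tmpos bpos by (simp add: add_pos_pos)
  then show ?thesis using spos T0T1 by (simp add: \<theta>_def)
qed

lemma gfun0: "gfun 0 = \<Delta>" using cpos Tmpos by (simp add: gfun_def \<Delta>_def)

lemma exists_xx: "\<exists>y. 0 < y \<and> y < 1/2 \<and> y < T0/2 \<and> gfun y > \<Delta>/2"
proof -
  have "isCont gfun 0" unfolding gfun_def using cpos Tmpos by (intro continuous_intros) auto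
  then have lim: "(gfun \<longlongrightarrow> gfun 0) (at_right 0)"
    by (simp add: isCont_def filterlim_at_split)
  have e1: "eventually (\<lambda>y. \<Delta>/2 < gfun y) (at_right 0)"
    using order_tendstoD(1)[OF lim, of "\<Delta>/2"] gfun0 \<Delta>_pos by simp
  have "min (1/2) (T0/2) > 0" using T0T1 by simp
  then have e2: "eventually (\<lambda>y. y < min (1/2) (T0/2)) (at_right (0::real))"
    unfolding eventually_at_right_field by (intro exI[of _ "min (1/2) (T0/2)"]) auto
  from eventually_conj[OF e1 e2] obtain bb where bb: "bb > 0"
    "\<And>y. y > 0 \<Longrightarrow> y < bb \<Longrightarrow> \<Delta>/2 < gfun y \<and> y < min (1/2) (T0/2)"
    unfolding eventually_at_right_field by auto
  show ?thesis using bb(2)[of "bb/2"] bb(1) by (intro exI[of _ "bb/2"]) auto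
qed

definition "xx = (SOME y. 0 < y \<and> y < 1/2 \<and> y < T0/2 \<and> gfun y > \<Delta>/2)"

lemma xx: "0 < xx" "xx < 1/2" "xx < T0/2" "gfun xx > \<Delta>/2"
  using someI_ex[OF exists_xx] unfolding xx_def[symmetric] by auto

definition "eps = \<theta> * xx"
definition "q = (1 - xx) * b * (T0 - xx) / (c * (1 + \<alpha> * eps))"
definition "\<kappa>V = xx * b * (T0 - xx) / (1 + \<alpha> * eps)"
definition "\<delta>1 = xx * s / (2 * T0)"
definition "\<delta>2 = a * xx * T0 / Tmax"
definition "L0 = max ((T0 - xx) / \<delta>1) (max 0 ((M - (T0 + xx)) / \<delta>2))"
definition "kdec = \<mu> + 2 * a * M / Tmax + c"
definition "C = q + b * M * \<tau> * exp (c * \<tau>)"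
definition "\<kappa> = min (\<Delta> / 2) (\<kappa>V / C)"
definition "\<epsilon>0 = min eps (q * eps)"
definition "\<eta>0 = \<epsilon>0 * exp (- kdec * L0)"

lemma consts_pos: "eps > 0" "q > 0" "\<kappa>V > 0" "\<delta>1 > 0" "\<delta>2 > 0" "L0 \<ge> 0" "kdec > 0"
  "C > 0" "\<kappa> > 0" "\<epsilon>0 > 0" "\<eta>0 > 0" "T0 - xx > 0" "L0 \<ge> (T0 - xx) / \<delta>1"
  "L0 \<ge> max 0 ((M - (T0 + xx)) / \<delta>2)"
proof -
  show e: "eps > 0" using \<theta>_pos xx by (simp add: eps_def)
  show t: "T0 - xx > 0" using xx T0T1 by simp
  have "1 + \<alpha> * eps > 0" using e alpos by (simp add: add_pos_pos)
  then show q: "q > 0" using xx t bpos cpos by (simp add: q_def)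
  show "\<kappa>V > 0" using xx t bpos \<open>1 + \<alpha> * eps > 0\<close> by (simp add: \<kappa>V_def)
  show d1: "\<delta>1 > 0" using xx spos T0T1 by (simp add: \<delta>1_def)
  show "\<delta>2 > 0" using xx apos T0T1 Tmpos by (simp add: \<delta>2_def)
  show "L0 \<ge> (T0 - xx) / \<delta>1" "L0 \<ge> max 0 ((M - (T0 + xx)) / \<delta>2)" by (simp_all add: L0_def)
  then show "L0 \<ge> 0" using t d1 by (smt (verit) divide_pos_pos)
  show "kdec > 0" using mupos apos M_ge Tmpos cpos by (simp add: kdec_def add_pos_nonneg add_nonneg_pos)
  have "b * M * \<tau> * exp (c * \<tau>) \<ge> 0" using bpos M_ge taupos by simp
  then show C: "C > 0" using q by (simp add: C_def)
  show "\<kappa> > 0" using \<Delta>_pos \<open>\<kappa>V > 0\<close> C by (simp add: \<kappa>_def)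
  show "\<epsilon>0 > 0" using e q by (simp add: \<epsilon>0_def)
  then show "\<eta>0 > 0" by (simp add: \<eta>0_def)
qed


definition "Wf T I V t = I t + q * V t + (integral {-\<tau>..t} (F T V) - integral {-\<tau>..t - \<tau>} (F T V))"
definition "DW T I V t = F T V t + I t * (a * (1 - (T t + I t) / Tmax) - \<mu> + q * p) - q * c * V t"
definition "absorbed T I V ta \<longleftrightarrow> ta \<ge> 1 + \<tau> \<and> (\<forall>t\<ge>ta - \<tau>. T t \<le> M \<and> I t \<le> M \<and> V t \<le> M)"

definition "\<eta>T = s / (2 * (d + 2 * a * M / Tmax + b / \<alpha>))"
definition "\<eta>V = min (\<eta>0 / (2 * C)) (p * \<eta>0 / (4 * c))"
definition "\<phi> = b * \<eta>T * \<eta>V / (1 + \<alpha> * M)"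
definition "\<eta>I = \<phi> / (2 * (\<mu> + 2 * a * M / Tmax))"

lemma etas_pos: "\<eta>T > 0" "\<eta>V > 0" "\<phi> > 0" "\<eta>I > 0"
proof -
  have "d + 2 * a * M / Tmax + b / \<alpha> > 0" using dpos apos M_ge Tmpos bpos alpos by (simp add: add_pos_nonneg)
  then show t: "\<eta>T > 0" using spos by (simp add: \<eta>T_def)
  show v: "\<eta>V > 0" using consts_pos ppos cpos by (simp add: \<eta>V_def)
  have "1 + \<alpha> * M > 0" using alpos M_ge by (simp add: add_pos_pos)
  then show f: "\<phi> > 0" using t v bpos by (simp add: \<phi>_def)
  have "\<mu> + 2 * a * M / Tmax > 0" using mupos apos M_ge Tmpos by (simp add: add_pos_nonneg)
  then show "\<eta>I > 0" using f by (simp add: \<eta>I_def)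
qed

context
  fixes T I V :: "real \<Rightarrow> real"
  assumes sol: "is_solution s d a Tmax b \<alpha> \<mu> p c \<tau> T I V"
begin

lemmas P = pos[OF sol] derT[OF sol] derI[OF sol] derV[OF sol] cont_sub[OF sol]

lemma F_props: "t \<ge> -\<tau> \<Longrightarrow> F T V t \<ge> 0 \<and> F T V t \<le> b * T t / \<alpha> \<and> F T V t \<le> b * T t * V t"
  unfolding F_def using P(1)[of t] bpos alpos
  by (auto intro!: F_nonneg F_le_sat F_le_lin)

lemma DT_le_hq: "t > 0 \<Longrightarrow> DT T I V t \<le> hq (T t)"
proof -
  assume t: "t > 0"
  then have p: "T t > 0" "I t > 0" "V t > 0" using P(1)[of t] taupos by auto
  have "F T V t \<ge> 0" using F_props[of t] t taupos by auto
  moreover have "a * T t * I t / Tmax \<ge> 0" using p apos Tmpos by simp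
  moreover have "DT T I V t = hq (T t) - a * T t * I t / Tmax - F T V t"
    unfolding DT_def hq_def by (rule l2)
  ultimately show ?thesis by linarith
qed


lemma T_bound: "\<exists>tT\<ge>1. \<forall>t\<ge>tT. T t \<le> MT"
proof -
  define \<delta> where "\<delta> = a * T0 / Tmax"
  have dp: "\<delta> > 0" using apos Tmpos T0T1 by (simp add: \<delta>_def)
  define tT where "tT = 1 + max 0 ((T 1 - MT) / \<delta>)"
  have "\<forall>t\<ge>tT. T t \<le> MT"
  proof (intro allI impI)
    fix t assume t: "t \<ge> tT"
    show "T t \<le> MT"
    proof (rule reach_below[where x = T and x' = "DT T I V" and u = 1 and v = t and \<delta> = \<delta> and B = "T 1"])
      show "1 \<le> t" using t by (auto simp: tT_def)
      show "continuous_on {1..t} T" using P(5)[of 1 t] taupos by auto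
      fix r assume r: "1 < r" "r < t"
      show "(T has_real_derivative DT T I V r) (at r)" using P(2)[of r] r by simp
      assume "MT \<le> T r"
      then have "hq (T r) \<le> - (a / Tmax) * 1 * T0" by (intro hq_upper) (auto simp: MT_def)
      then show "DT T I V r \<le> - \<delta>" using DT_le_hq[of r] r by (simp add: \<delta>_def)
    qed (use dp t tT_def in auto)
  qed
  moreover have "tT \<ge> 1" by (simp add: tT_def)
  ultimately show ?thesis by blast
qed

lemma I_bound: "\<exists>tI\<ge>1. \<forall>t\<ge>tI. I t \<le> KI"
proof -
  obtain tT where tT: "tT \<ge> 1" "\<And>t. t \<ge> tT \<Longrightarrow> T t \<le> MT" using T_bound by blast
  define u where "u = tT + \<tau>"
  define tI where "tI = u + max 0 ((I u - KI) / 1)"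
  have "\<forall>t\<ge>tI. I t \<le> KI"
  proof (intro allI impI)
    fix t assume t: "t \<ge> tI"
    show "I t \<le> KI"
    proof (rule reach_below[where x = I and x' = "DI T I V" and u = u and v = t and \<delta> = 1 and B = "I u"])
      show "u \<le> t" using t by (auto simp: tI_def)
      show "continuous_on {u..t} I" using P(5)[of u t] taupos tT by (auto simp: u_def)
      fix r assume r: "u < r" "r < t"
      have r0: "r > 0" using r tT taupos by (simp add: u_def)
      show "(I has_real_derivative DI T I V r) (at r)" using P(3)[of r] r0 by simp
      assume KIr: "KI \<le> I r"
      have "F T V (r - \<tau>) \<le> b * T (r - \<tau>) / \<alpha>" using F_props[of "r - \<tau>"] r0 by simp
      also have "\<dots> \<le> b * MT / \<alpha>" using tT(2)[of "r - \<tau>"] r bpos alpos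
        by (simp add: u_def divide_right_mono)
      finally have f: "F T V (r - \<tau>) \<le> b * MT / \<alpha>" .
      show "DI T I V r \<le> - 1" unfolding DI_def
        by (rule I_up_alg[OF apos Tmpos f _ _ _ mupos])
          (use MT_pos bpos alpos P(1)[of r] r0 taupos KIr in \<open>auto simp: KI_def\<close>)
    qed (use t tI_def in auto)
  qed
  moreover have "tI \<ge> 1" using tT taupos by (simp add: tI_def u_def)
  ultimately show ?thesis by blast
qed

lemma V_bound: "\<exists>tV\<ge>1. \<forall>t\<ge>tV. V t \<le> KV"
proof -
  obtain u where tI: "u \<ge> 1" "\<And>t. t \<ge> u \<Longrightarrow> I t \<le> KI" using I_bound by blast
  define tV where "tV = u + max 0 ((V u - KV) / 1)"
  have "\<forall>t\<ge>tV. V t \<le> KV"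
  proof (intro allI impI)
    fix t assume t: "t \<ge> tV"
    show "V t \<le> KV"
    proof (rule reach_below[where x = V and x' = "DV I V" and u = u and v = t and \<delta> = 1 and B = "V u"])
      show "u \<le> t" using t by (auto simp: tV_def)
      show "continuous_on {u..t} V" using P(5)[of u t] taupos tI by auto
      fix r assume r: "u < r" "r < t"
      have r0: "r > 0" using r tI by simp
      show "(V has_real_derivative DV I V r) (at r)" using P(4)[of r] r0 by simp
      assume KVr: "KV \<le> V r"
      have "p * I r \<le> p * KI" using tI(2)[of r] r ppos by simp
      moreover have "c * V r \<ge> c * KV" using KVr cpos by simp
      moreover have "c * KV = p * KI + 1" using cpos by (simp add: KV_def)
      ultimately show "DV I V r \<le> - 1" by (simp add: DV_def)
    qed (use t tV_def in auto)
  qed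
  moreover have "tV \<ge> 1" using tI by (simp add: tV_def)
  ultimately show ?thesis by blast
qed

lemma absorb: "\<exists>ta. ta \<ge> 1 + \<tau> \<and> (\<forall>t\<ge>ta - \<tau>. T t \<le> M \<and> I t \<le> M \<and> V t \<le> M)"
proof -
  obtain t1 t2 t3 where "t1 \<ge> 1" "\<And>t. t \<ge> t1 \<Longrightarrow> T t \<le> MT" "t2 \<ge> 1" "\<And>t. t \<ge> t2 \<Longrightarrow> I t \<le> KI"
    "t3 \<ge> 1" "\<And>t. t \<ge> t3 \<Longrightarrow> V t \<le> KV"
    using T_bound I_bound V_bound by metis
  then show ?thesis using M_ge
    by (intro exI[of _ "max t1 (max t2 t3) + \<tau>"]) (auto intro: order_trans)
qed


lemma T_lower: "\<exists>t0. \<forall>t\<ge>t0. T t \<ge> s / (2 * (d + 2 * a * M / Tmax + b / \<alpha>))"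
proof -
  obtain ta where ta: "ta \<ge> 1 + \<tau>" "\<And>t. t \<ge> ta - \<tau> \<Longrightarrow> T t \<le> M \<and> I t \<le> M \<and> V t \<le> M"
    using absorb by blast
  define G where "G = d + 2 * a * M / Tmax + b / \<alpha>"
  have Gp: "G > 0" using dpos apos Tmpos bpos alpos M_ge by (simp add: G_def add_pos_nonneg)
  define \<eta> where "\<eta> = s / (2 * G)"
  have "\<forall>t\<ge>ta + \<eta> / (s/2). T t \<ge> \<eta>"
  proof (intro allI impI)
    fix t assume t: "t \<ge> ta + \<eta> / (s/2)"
    have "\<eta> / (s/2) \<ge> 0" using Gp spos by (simp add: \<eta>_def)
    then have tt: "ta \<le> t" using t by linarith
    show "T t \<ge> \<eta>"
    proof (rule reach_above[where x = T and x' = "DT T I V" and u = ta and v = t and \<delta> = "s/2" and B = 0])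
      show "ta \<le> t" by fact
      show "continuous_on {ta..t} T" using P(5)[of ta t] ta taupos by auto
      fix r assume r: "ta < r" "r < t"
      have r0: "r > 0" using r ta taupos by simp
      show "(T has_real_derivative DT T I V r) (at r)" using P(2)[of r] r0 by simp
      assume "T r \<le> \<eta>"
      then show "DT T I V r \<ge> s / 2" unfolding DT_def
        using T_low_alg[where T="T r" and I="I r" and f="F T V r" and M=M and G=G, OF spos dpos apos Tmpos bpos alpos]
          P(1)[of r] r0 taupos ta(2)[of r] r F_props[of r] G_def \<eta>_def by auto
    qed (use t spos tt P(1)[of ta] ta taupos in auto)
  qed
  then show ?thesis unfolding \<eta>_def G_def by blast
qed


lemma F_fun: "F T V = (\<lambda>t. b * T t * V t / (1 + \<alpha> * V t))"
  by (rule ext) (simp add: F_def)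

lemma F_cont: "continuous_on {-\<tau>..} (F T V)"
proof -
  have "\<forall>t\<in>{-\<tau>..}. 1 + \<alpha> * V t \<noteq> 0" using P(1) alpos
    by (metis add_pos_pos atLeast_iff less_numeral_extra(1) mult_pos_pos order_less_irrefl)
  then show ?thesis unfolding F_fun using contT[OF sol] contV[OF sol]
    by (intro continuous_intros) auto
qed

lemma F_int: "-\<tau> \<le> u \<Longrightarrow> F T V integrable_on {u..v}"
  by (rule integrable_continuous_real, rule continuous_on_subset[OF F_cont]) auto

lemma G_eq: "t \<ge> 0 \<Longrightarrow> integral {-\<tau>..t} (F T V) - integral {-\<tau>..t - \<tau>} (F T V) = integral {t - \<tau>..t} (F T V)"
  using Henstock_Kurzweil_Integration.integral_combine[where a="-\<tau>" and c="t - \<tau>" and b=t and f="F T V"] F_int[of "-\<tau>" t] taupos by simp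

lemma G_nonneg: "t \<ge> 0 \<Longrightarrow> integral {-\<tau>..t} (F T V) - integral {-\<tau>..t - \<tau>} (F T V) \<ge> 0"
  unfolding G_eq by (rule integral_nonneg) (use F_int F_props in auto)

lemma W_der: "t > 0 \<Longrightarrow> (Wf T I V has_real_derivative DW T I V t) (at t)"
proof -
  assume t: "t > 0"
  have d1: "((\<lambda>u. integral {-\<tau>..u} (F T V)) has_real_derivative F T V t) (at t)"
    by (rule deriv_integral_at[OF F_cont]) (use t taupos in auto)
  have "((\<lambda>u. integral {-\<tau>..u} (F T V)) has_real_derivative F T V (t - \<tau>)) (at (t + - \<tau>))"
    using deriv_integral_at[OF F_cont, of "t - \<tau>"] t by simp
  then have d2: "((\<lambda>u. integral {-\<tau>..u - \<tau>} (F T V)) has_real_derivative F T V (t - \<tau>)) (at t)"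
    unfolding DERIV_shift by simp
  have "((\<lambda>u. I u + q * V u + (integral {-\<tau>..u} (F T V) - integral {-\<tau>..u - \<tau>} (F T V)))
     has_real_derivative (DI T I V t + q * DV I V t + (F T V t - F T V (t - \<tau>)))) (at t)"
    by (intro DERIV_add DERIV_cmult DERIV_diff P(3) P(4) d1 d2 t)
  moreover have "DI T I V t + q * DV I V t + (F T V t - F T V (t - \<tau>)) = DW T I V t"
    by (simp add: DI_def DV_def DW_def algebra_simps)
  moreover have "Wf T I V = (\<lambda>u. I u + q * V u + (integral {-\<tau>..u} (F T V) - integral {-\<tau>..u - \<tau>} (F T V)))"
    by (rule ext) (simp add: Wf_def)
  ultimately show ?thesis by simp
qed

lemma W_ge: "t \<ge> 0 \<Longrightarrow> Wf T I V t \<ge> I t + q * V t"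
  using G_nonneg[of t] by (simp add: Wf_def)

lemma W_pos: "t \<ge> 0 \<Longrightarrow> Wf T I V t > 0"
  using W_ge[of t] P(1)[of t] consts_pos taupos by (smt (verit) mult_pos_pos)

lemma W_small: "t \<ge> 0 \<Longrightarrow> Wf T I V t \<le> \<epsilon>0 \<Longrightarrow> I t \<le> eps \<and> V t \<le> eps"
proof -
  assume t: "t \<ge> 0" and w: "Wf T I V t \<le> \<epsilon>0"
  have p: "I t > 0" "V t > 0" using P(1)[of t] t taupos by auto
  have "I t + q * V t \<le> \<epsilon>0" using W_ge[OF t] w by simp
  moreover have "q * V t > 0" using p consts_pos by simp
  ultimately have "I t \<le> eps" "q * V t \<le> q * eps" using p unfolding \<epsilon>0_def by auto
  then show ?thesis using consts_pos by simp
qed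

lemma V_back: assumes "1 \<le> r" "r \<le> t" shows "V r \<le> V t * exp (c * (t - r))"
proof -
  have "V t \<ge> V r * exp (- c * (t - r))"
  proof (rule exp_lb[where x' = "DV I V"])
    show "r \<le> t" "continuous_on {r..t} V" using assms P(5)[of r t] taupos by auto
    fix u assume u: "r < u" "u < t"
    show "(V has_real_derivative DV I V u) (at u)" using P(4)[of u] u assms by simp
    show "DV I V u \<ge> - c * V u" using P(1)[of u] u assms taupos ppos by (simp add: DV_def)
  qed
  then have "V t * exp (c * (t - r)) \<ge> V r * exp (- c * (t - r)) * exp (c * (t - r))"
    by (simp add: mult_right_mono)
  also have "V r * exp (- c * (t - r)) * exp (c * (t - r)) = V r"
    by (simp add: mult.assoc exp_add[symmetric])
  finally show ?thesis .
qed

lemma G_le: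
  assumes ab: "absorbed T I V ta" and t: "t \<ge> ta"
  shows "integral {-\<tau>..t} (F T V) - integral {-\<tau>..t - \<tau>} (F T V) \<le> b * M * \<tau> * exp (c * \<tau>) * V t"
proof -
  have ta: "ta \<ge> 1 + \<tau>" "\<And>u. u \<ge> ta - \<tau> \<Longrightarrow> T u \<le> M \<and> I u \<le> M \<and> V u \<le> M"
    using ab by (auto simp: absorbed_def)
  define K where "K = b * M * exp (c * \<tau>) * V t"
  have "integral {t - \<tau>..t} (F T V) \<le> integral {t - \<tau>..t} (\<lambda>_. K)"
  proof (rule integral_le)
    show "F T V integrable_on {t - \<tau>..t}" using F_int ta t taupos by simp
    show "(\<lambda>_. K) integrable_on {t - \<tau>..t}" by (rule integrable_const_ivl)
    fix r assume r: "r \<in> {t - \<tau>..t}"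
    have r1: "r \<ge> 1" "r \<ge> ta - \<tau>" using r ta t by auto
    have pr: "T r > 0" "V r > 0" using P(1)[of r] r1 taupos by auto
    have "F T V r \<le> b * T r * V r" using F_props[of r] r1 taupos by simp
    also have "\<dots> \<le> b * M * V r" using ta(2)[OF r1(2)] pr bpos by (simp add: mult_right_mono)
    also have "\<dots> \<le> b * M * (V t * exp (c * (t - r)))"
      using V_back[of r t] r r1 bpos M_ge by (simp add: mult_left_mono)
    also have "\<dots> \<le> b * M * (V t * exp (c * \<tau>))"
      using r cpos P(1)[of t] t ta taupos bpos M_ge
      by (intro mult_left_mono) (auto simp: mult_left_mono)
    finally show "F T V r \<le> K" by (simp add: K_def ac_simps)
  qed
  also have "\<dots> = \<tau> * K" using taupos by simp
  finally have "integral {t - \<tau>..t} (F T V) \<le> \<tau> * K" .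
  moreover have "\<tau> * K = b * M * \<tau> * exp (c * \<tau>) * V t" by (simp add: K_def ac_simps)
  moreover have "t \<ge> 0" using t ta taupos by simp
  ultimately show ?thesis using G_eq[of t] by simp
qed

lemma W_up: "absorbed T I V ta \<Longrightarrow> t \<ge> ta \<Longrightarrow> Wf T I V t \<le> I t + C * V t"
  using G_le[of ta t] by (simp add: Wf_def C_def algebra_simps)


lemma DT_eq: "DT T I V t = hq (T t) - a * T t * I t / Tmax - F T V t"
  unfolding DT_def hq_def by (rule l2)

lemma W_dec:
  assumes ab: "absorbed T I V ta" and t: "t \<ge> ta"
  shows "DW T I V t \<ge> - kdec * Wf T I V t"
proof -
  have ta: "ta \<ge> 1 + \<tau>" "T t \<le> M \<and> I t \<le> M \<and> V t \<le> M"
    using ab t taupos by (auto simp: absorbed_def)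
  have t0: "t \<ge> 0" using ta t taupos by simp
  have p: "T t > 0" "I t > 0" "V t > 0" using P(1)[of t] t0 taupos by auto
  define co where "co = a * (1 - (T t + I t) / Tmax) - \<mu> + q * p"
  have "(T t + I t) / Tmax \<le> 2 * M / Tmax" using ta p Tmpos by (simp add: divide_right_mono)
  then have "a * ((T t + I t) / Tmax) \<le> a * (2 * M / Tmax)" using apos by (intro mult_left_mono) auto
  moreover have "a * (1 - (T t + I t) / Tmax) = a - a * ((T t + I t) / Tmax)" by (simp add: algebra_simps)
  moreover have "a * (2 * M / Tmax) = 2 * a * M / Tmax" by simp
  moreover have "q * p \<ge> 0" using consts_pos ppos by simp
  ultimately have "co \<ge> - (2 * a * M / Tmax + \<mu>)" unfolding co_def using apos by linarith
  then have f1: "I t * co \<ge> I t * (- (2 * a * M / Tmax + \<mu>))" using p by (intro mult_left_mono) auto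
  have f2: "(2 * a * M / Tmax + \<mu>) * I t \<le> kdec * I t" using p cpos by (intro mult_right_mono) (auto simp: kdec_def)
  have f3: "c * (q * V t) \<le> kdec * (q * V t)" using p consts_pos mupos apos M_ge Tmpos
    by (intro mult_right_mono) (auto simp: kdec_def)
  have f4: "kdec * (I t + q * V t) \<le> kdec * Wf T I V t" using W_ge[OF t0] consts_pos
    by (intro mult_left_mono) auto
  have f5: "kdec * (I t + q * V t) = kdec * I t + kdec * (q * V t)" by (simp add: algebra_simps)
  have f6: "F T V t \<ge> 0" using F_props[of t] t0 taupos by simp
  have e: "DW T I V t = F T V t + I t * co - c * (q * V t)" by (simp add: DW_def co_def ac_simps)
  have e2: "I t * (- (2 * a * M / Tmax + \<mu>)) = - ((2 * a * M / Tmax + \<mu>) * I t)" by (simp add: algebra_simps)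
  show ?thesis unfolding e using f1 f2 f3 f4 f5 f6 e2 by simp
qed

lemma W_good:
  assumes t: "t > 0" and reg: "T0 - xx \<le> T t" "T t \<le> T0 + xx" "I t \<le> eps" "V t \<le> eps"
  shows "DW T I V t \<ge> \<Delta> / 2 * I t + \<kappa>V * V t"
proof -
  have p: "T t > 0" "I t > 0" "V t > 0" using P(1)[of t] t taupos by auto
  define co where "co = a * (1 - (T t + I t) / Tmax) - \<mu> + q * p"
  have "T t + I t \<le> T0 + xx + \<theta> * xx" using reg by (simp add: eps_def)
  then have "(T t + I t) / Tmax \<le> (T0 + xx + \<theta> * xx) / Tmax" using Tmpos by (simp add: divide_right_mono)
  then have "a * (1 - (T t + I t) / Tmax) \<ge> a * (1 - (T0 + xx + \<theta> * xx) / Tmax)"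
    using apos by (intro mult_left_mono) auto
  moreover have "gfun xx = a * (1 - (T0 + xx + \<theta> * xx) / Tmax) - \<mu> + q * p"
    by (simp add: gfun_def q_def eps_def)
  ultimately have "co \<ge> gfun xx" unfolding co_def by linarith
  then have "co \<ge> \<Delta> / 2" using xx(4) by simp
  then have f1: "I t * co \<ge> I t * (\<Delta> / 2)" using p by (intro mult_left_mono) auto
  have den: "1 + \<alpha> * eps > 0" "1 + \<alpha> * V t > 0" using alpos consts_pos p by (simp_all add: add_pos_pos)
  have "b * (T0 - xx) * V t / (1 + \<alpha> * eps) \<le> b * T t * V t / (1 + \<alpha> * V t)"
  proof (rule frac_le)
    show "0 \<le> b * T t * V t" using p bpos by simp
    show "b * (T0 - xx) * V t \<le> b * T t * V t" using reg p bpos by (intro mult_right_mono mult_left_mono) auto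
    show "0 < 1 + \<alpha> * V t" by fact
    show "1 + \<alpha> * V t \<le> 1 + \<alpha> * eps" using reg alpos by simp
  qed
  then have f2: "F T V t \<ge> b * (T0 - xx) * V t / (1 + \<alpha> * eps)" by (simp add: F_def)
  have qc: "q * c = (1 - xx) * (b * (T0 - xx)) / (1 + \<alpha> * eps)" using cpos by (simp add: q_def ac_simps)
  have f3: "b * (T0 - xx) * V t / (1 + \<alpha> * eps) - q * c * V t = \<kappa>V * V t"
    unfolding qc \<kappa>V_def using l4[of "1 + \<alpha> * eps" "b * (T0 - xx)" "V t" xx] den by (simp add: ac_simps)
  have e: "DW T I V t = F T V t + I t * co - q * c * V t" by (simp add: DW_def co_def)
  show ?thesis unfolding e using f1 f2 f3 by (simp add: ac_simps)
qed

lemma W_good2: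
  assumes ab: "absorbed T I V ta" and t: "t \<ge> ta"
    and reg: "T0 - xx \<le> T t" "T t \<le> T0 + xx" "I t \<le> eps" "V t \<le> eps"
  shows "DW T I V t \<ge> \<kappa> * Wf T I V t"
proof -
  have t0: "t > 0" using ab t taupos by (auto simp: absorbed_def)
  have p: "I t > 0" "V t > 0" using P(1)[of t] t0 taupos by auto
  have g: "DW T I V t \<ge> \<Delta> / 2 * I t + \<kappa>V * V t" by (rule W_good[OF t0 reg])
  have k1: "\<kappa> \<le> \<Delta> / 2" "\<kappa> \<le> \<kappa>V / C" unfolding \<kappa>_def by (rule min.cobounded1, rule min.cobounded2)
  then have "\<kappa> * C \<le> \<kappa>V" using consts_pos by (simp add: le_divide_eq)
  then have f1: "\<kappa> * C * V t \<le> \<kappa>V * V t" using p by (intro mult_right_mono) auto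
  have f2: "\<kappa> * I t \<le> \<Delta> / 2 * I t" using p k1 by (intro mult_right_mono) auto
  have f3: "\<kappa> * Wf T I V t \<le> \<kappa> * (I t + C * V t)"
    using W_up[OF ab t] consts_pos by (intro mult_left_mono) auto
  have f4: "\<kappa> * (I t + C * V t) = \<kappa> * I t + \<kappa> * C * V t" by (simp add: algebra_simps)
  show ?thesis using g f1 f2 f3 f4 by linarith
qed

lemma region:
  assumes ab: "absorbed T I V ta" and uv: "ta \<le> u" "u \<le> v"
    and small: "\<And>r. u < r \<Longrightarrow> r < v \<Longrightarrow> I r \<le> eps \<and> V r \<le> eps"
    and w: "u + L0 \<le> w" "w \<le> v"
  shows "T0 - xx \<le> T w \<and> T w \<le> T0 + xx"
proof
  have ta: "ta \<ge> 1 + \<tau>" "\<And>t. t \<ge> ta - \<tau> \<Longrightarrow> T t \<le> M \<and> I t \<le> M \<and> V t \<le> M"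
    using ab by (auto simp: absorbed_def)
  have u1: "u \<ge> 1" using ta uv taupos by simp
  have cT: "continuous_on {u..v} T" using P(5)[of u v] u1 taupos by auto
  show "T0 - xx \<le> T w"
  proof (rule reach_above[where x = T and x' = "DT T I V" and u = u and v = v and \<delta> = \<delta>1 and B = 0])
    fix r assume r: "u < r" "r < v"
    have r0: "r > 0" using r u1 by simp
    show "(T has_real_derivative DT T I V r) (at r)" using P(2)[of r] r0 by simp
    assume Tr: "T r \<le> T0 - xx"
    have p: "T r > 0" "I r > 0" "V r > 0" using P(1)[of r] r0 taupos by auto
    have sm: "I r \<le> eps" "V r \<le> eps" using small[OF r] by auto
    have T0r: "T r \<le> T0" using Tr xx by simp
    have h: "hq (T r) \<ge> xx * s / T0" using hq_lower[of xx "T r"] Tr p xx by simp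
    have "T r * I r \<le> T0 * eps" using T0r sm p by (intro mult_mono) auto
    then have "a * (T r * I r) / Tmax \<le> a * (T0 * eps) / Tmax" using apos Tmpos
      by (intro divide_right_mono mult_left_mono) auto
    then have f1: "a * T r * I r / Tmax \<le> a * T0 * eps / Tmax" by (simp add: ac_simps)
    have "T r * V r \<le> T0 * eps" using T0r sm p by (intro mult_mono) auto
    then have "b * (T r * V r) \<le> b * (T0 * eps)" using bpos by simp
    then have f2: "F T V r \<le> b * T0 * eps" using F_props[of r] r0 taupos by (simp add: ac_simps)
    have nz: "T0 \<noteq> 0" "a / Tmax + b \<noteq> 0" using T0T1 apos bpos Tmpos
      by (simp, smt (verit) divide_pos_pos)
    have f3: "a * T0 * eps / Tmax + b * T0 * eps = xx * s / (2 * T0)"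
      using l6[of a "T0 * eps" Tmax b] l7[OF nz, of s xx] by (simp add: eps_def \<theta>_def ac_simps)
    have f4: "xx * s / T0 - xx * s / (2 * T0) = \<delta>1" by (simp add: \<delta>1_def field_simps)
    show "DT T I V r \<ge> \<delta>1" unfolding DT_eq using h f1 f2 f3 f4 by linarith
  next
    show "\<delta>1 > 0" using consts_pos by simp
    show "T u \<ge> 0" using P(1)[of u] u1 taupos by auto
    show "w \<in> {u + max 0 ((T0 - xx - 0) / \<delta>1)..v}" using w consts_pos
      by (auto simp: max_def)
  qed (use uv cT in auto)
  show "T w \<le> T0 + xx"
  proof (rule reach_below[where x = T and x' = "DT T I V" and u = u and v = v and \<delta> = \<delta>2 and B = M])
    fix r assume r: "u < r" "r < v"
    have r0: "r > 0" using r u1 by simp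
    show "(T has_real_derivative DT T I V r) (at r)" using P(2)[of r] r0 by simp
    assume Tr: "T0 + xx \<le> T r"
    have "hq (T r) \<le> - (a / Tmax) * xx * T0" using hq_upper[of xx "T r"] Tr xx by simp
    then show "DT T I V r \<le> - \<delta>2" using DT_le_hq[of r] r0 by (simp add: \<delta>2_def)
  next
    show "\<delta>2 > 0" using consts_pos by simp
    show "T u \<le> M" using ta(2)[of u] uv taupos by simp
    show "w \<in> {u + max 0 ((M - (T0 + xx)) / \<delta>2)..v}" using w consts_pos by auto
  qed (use uv cT in auto)
qed


lemma W_cont: "0 < u \<Longrightarrow> continuous_on {u..v} (Wf T I V)"
  by (rule deriv_cont[where x' = "DW T I V"]) (auto intro: W_der)

lemma exists_big:
  assumes ab: "absorbed T I V ta" and t0: "t0 \<ge> ta"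
  shows "\<exists>t1\<ge>t0. Wf T I V t1 \<ge> \<epsilon>0"
proof (rule ccontr)
  assume "\<not> ?thesis"
  then have lt: "\<And>t. t \<ge> t0 \<Longrightarrow> Wf T I V t < \<epsilon>0" by force
  have ta1: "ta \<ge> 1 + \<tau>" using ab by (simp add: absorbed_def)
  have t00: "t0 > 0" using ta1 t0 taupos by simp
  have small: "\<And>r. t0 < r \<Longrightarrow> I r \<le> eps \<and> V r \<le> eps"
    using W_small lt t00 by (meson less_eq_real_def order_less_trans)
  define u1 where "u1 = t0 + L0"
  define w1 where "w1 = Wf T I V u1"
  have u1: "u1 \<ge> t0" using consts_pos by (simp add: u1_def)
  have w1: "w1 > 0" "w1 < \<epsilon>0" using W_pos[of u1] lt[of u1] u1 t00 by (auto simp: w1_def)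
  define v where "v = u1 + ln (\<epsilon>0 / w1) / \<kappa>"
  have lnp: "ln (\<epsilon>0 / w1) > 0" using w1 by simp
  then have uv: "u1 \<le> v" using consts_pos by (simp add: v_def)
  have "Wf T I V v \<ge> Wf T I V u1 * exp (\<kappa> * (v - u1))"
  proof (rule exp_lb[where x' = "DW T I V"])
    show "u1 \<le> v" by fact
    show "continuous_on {u1..v} (Wf T I V)" using W_cont u1 t00 by simp
    fix r assume r: "u1 < r" "r < v"
    show "(Wf T I V has_real_derivative DW T I V r) (at r)" using W_der r u1 t00 by simp
    have reg: "T0 - xx \<le> T r \<and> T r \<le> T0 + xx"
      by (rule region[OF ab t0, of v]) (use uv u1 r small in \<open>auto simp: u1_def\<close>)
    show "DW T I V r \<ge> \<kappa> * Wf T I V r"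
      using W_good2[OF ab, of r] reg small[of r] r u1 t0 by simp
  qed
  also have "\<kappa> * (v - u1) = ln (\<epsilon>0 / w1)" using consts_pos by (simp add: v_def)
  finally have "Wf T I V v \<ge> \<epsilon>0" using w1 consts_pos by (simp add: w1_def)
  then show False using lt[of v] uv u1 by simp
qed

lemma stay_big:
  assumes ab: "absorbed T I V ta" and t1: "t1 \<ge> ta" "Wf T I V t1 \<ge> \<epsilon>0" and t2: "t2 \<ge> t1"
  shows "Wf T I V t2 \<ge> \<eta>0"
proof (rule ccontr)
  assume "\<not> ?thesis"
  then have w2: "Wf T I V t2 < \<eta>0" by simp
  have ta1: "ta \<ge> 1 + \<tau>" using ab by (simp add: absorbed_def)
  have t10: "t1 > 0" using ta1 t1 taupos by simp
  have ee: "exp (- kdec * L0) \<le> 1" using consts_pos by simp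
  have "\<eta>0 \<le> \<epsilon>0" unfolding \<eta>0_def using ee consts_pos by (simp add: mult_left_le)
  have cw: "continuous_on {t1..t2} (Wf T I V)" using W_cont t10 by simp
  define S where "S = {t1..t2} \<inter> Wf T I V -` {\<epsilon>0..}"
  have cS: "closed S" unfolding S_def by (rule continuous_closed_preimage[OF cw]) auto
  have t1S: "t1 \<in> S" using t1 t2 by (auto simp: S_def)
  have bS: "bdd_above S" by (auto simp: S_def)
  define z where "z = Sup S"
  have zS: "z \<in> S" unfolding z_def using closed_contains_Sup[OF _ bS cS] t1S by blast
  then have z: "t1 \<le> z" "z \<le> t2" "Wf T I V z \<ge> \<epsilon>0" by (auto simp: S_def)
  have after: "Wf T I V r < \<epsilon>0" if "z < r" "r \<le> t2" for r
  proof (rule ccontr)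
    assume "\<not> ?thesis"
    then have "r \<in> S" using that z by (auto simp: S_def)
    then have "r \<le> z" unfolding z_def using bS by (simp add: cSup_upper)
    then show False using that by simp
  qed
  have z0: "z > 0" using z t10 by simp
  have decay: "Wf T I V w \<ge> Wf T I V z * exp (- kdec * (w - z))" if "z \<le> w" for w
  proof (rule exp_lb[where x' = "DW T I V"])
    show "z \<le> w" by fact
    show "continuous_on {z..w} (Wf T I V)" using W_cont z0 by simp
    fix r assume r: "z < r" "r < w"
    show "(Wf T I V has_real_derivative DW T I V r) (at r)" using W_der r z0 by simp
    show "DW T I V r \<ge> - kdec * Wf T I V r" using W_dec[OF ab, of r] r z t1 by simp
  qed
  have key: "Wf T I V w \<ge> \<eta>0" if "z \<le> w" "w \<le> z + L0" for w
  proof -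
    have "exp (- kdec * (w - z)) \<ge> exp (- kdec * L0)" using that consts_pos by simp
    then have "Wf T I V z * exp (- kdec * (w - z)) \<ge> \<epsilon>0 * exp (- kdec * L0)"
      using z consts_pos by (intro mult_mono) auto
    then show ?thesis using decay[OF that(1)] by (simp add: \<eta>0_def)
  qed
  show False
  proof (cases "t2 \<le> z + L0")
    case True then show ?thesis using key[of t2] z w2 by simp
  next
    case False
    define u1 where "u1 = z + L0"
    have u1: "z \<le> u1" "u1 \<le> t2" using False consts_pos by (auto simp: u1_def)
    have small: "\<And>r. z < r \<Longrightarrow> r < t2 \<Longrightarrow> I r \<le> eps \<and> V r \<le> eps"
      using W_small after z0 by (meson less_eq_real_def order_less_trans)
    have "Wf T I V u1 \<le> Wf T I V t2"
    proof (rule incr_lemma[where x = "Wf T I V" and u = u1 and v = t2 and x' = "DW T I V"])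
      show "u1 \<le> t2" by fact
      show "continuous_on {u1..t2} (Wf T I V)" using W_cont u1 z0 by simp
      fix r assume r: "u1 < r" "r < t2"
      show "(Wf T I V has_real_derivative DW T I V r) (at r)" using W_der r u1 z0 by simp
      have reg: "T0 - xx \<le> T r \<and> T r \<le> T0 + xx"
      proof (rule region[where u = z and v = t2 and w = r, OF ab])
        show "ta \<le> z" "z \<le> t2" using z t1 by auto
        show "z + L0 \<le> r" "r \<le> t2" using r u1_def by auto
        show "\<And>ra. z < ra \<Longrightarrow> ra < t2 \<Longrightarrow> I ra \<le> eps \<and> V ra \<le> eps" by (rule small)
      qed
      have "DW T I V r \<ge> \<kappa> * Wf T I V r"
        using W_good2[OF ab, of r] reg small[of r] r u1 z t1 by simp
      moreover have "\<kappa> * Wf T I V r \<ge> 0" using W_pos[of r] r u1 z0 consts_pos by simp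
      ultimately show "DW T I V r \<ge> 0" by simp
    qed
    moreover have "Wf T I V u1 \<ge> \<eta>0" using key[of u1] u1 by (simp add: u1_def)
    ultimately show False using w2 by simp
  qed
qed

lemma W_eventually: "absorbed T I V ta \<Longrightarrow> \<exists>tW\<ge>ta. \<forall>t\<ge>tW. Wf T I V t \<ge> \<eta>0"
  using exists_big[of ta ta] stay_big[of ta] by (meson order.trans order_refl)


lemma V_lower: "\<exists>t0. \<forall>t\<ge>t0. V t \<ge> \<eta>V"
proof -
  obtain ta where ab: "absorbed T I V ta" using absorb by (auto simp: absorbed_def)
  obtain tW where tW: "tW \<ge> ta" "\<And>t. t \<ge> tW \<Longrightarrow> Wf T I V t \<ge> \<eta>0" using W_eventually[OF ab] by blast
  have ta1: "ta \<ge> 1 + \<tau>" using ab by (simp add: absorbed_def)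
  define \<delta> where "\<delta> = p * \<eta>0 / 4"
  have dp: "\<delta> > 0" using ppos consts_pos by (simp add: \<delta>_def)
  have "\<forall>t\<ge>tW + \<eta>V / \<delta>. V t \<ge> \<eta>V"
  proof (intro allI impI)
    fix t assume t: "t \<ge> tW + \<eta>V / \<delta>"
    have "\<eta>V / \<delta> \<ge> 0" using dp etas_pos by simp
    then have tt: "tW \<le> t" using t by linarith
    show "V t \<ge> \<eta>V"
    proof (rule reach_above[where x = V and x' = "DV I V" and u = tW and v = t and \<delta> = \<delta> and B = 0])
      show "tW \<le> t" by fact
      show "continuous_on {tW..t} V" using P(5)[of tW t] tW ta1 taupos by auto
      fix r assume r: "tW < r" "r < t"
      have r0: "r > 0" using r tW ta1 taupos by simp
      show "(V has_real_derivative DV I V r) (at r)" using P(4)[of r] r0 by simp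
      assume Vr: "V r \<le> \<eta>V"
      have "Wf T I V r \<le> I r + C * V r" using W_up[OF ab, of r] r tW by simp
      moreover have "Wf T I V r \<ge> \<eta>0" using tW(2)[of r] r by simp
      moreover have "C * V r \<le> C * (\<eta>0 / (2 * C))" using Vr consts_pos
        by (intro mult_left_mono) (auto simp: \<eta>V_def)
      moreover have "C * (\<eta>0 / (2 * C)) = \<eta>0 / 2" using consts_pos by simp
      ultimately have Ir: "I r \<ge> \<eta>0 / 2" by linarith
      have "c * V r \<le> c * (p * \<eta>0 / (4 * c))" using Vr cpos
        by (intro mult_left_mono) (auto simp: \<eta>V_def)
      moreover have "c * (p * \<eta>0 / (4 * c)) = \<delta>" using cpos by (simp add: \<delta>_def)
      moreover have "p * I r \<ge> p * (\<eta>0 / 2)" using Ir ppos by simp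
      ultimately show "DV I V r \<ge> \<delta>" by (simp add: DV_def \<delta>_def)
    qed (use dp t P(1)[of tW] tW ta1 taupos etas_pos in \<open>auto simp: max_def\<close>)
  qed
  then show ?thesis by blast
qed

lemma I_lower: "\<exists>t0. \<forall>t\<ge>t0. I t \<ge> \<eta>I"
proof -
  obtain ta where ab: "absorbed T I V ta" using absorb by (auto simp: absorbed_def)
  have ta: "ta \<ge> 1 + \<tau>" "\<And>t. t \<ge> ta - \<tau> \<Longrightarrow> T t \<le> M \<and> I t \<le> M \<and> V t \<le> M"
    using ab by (auto simp: absorbed_def)
  obtain tT where tT: "\<And>t. t \<ge> tT \<Longrightarrow> T t \<ge> \<eta>T" using T_lower unfolding \<eta>T_def by blast
  obtain tV where tV: "\<And>t. t \<ge> tV \<Longrightarrow> V t \<ge> \<eta>V" using V_lower by blast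
  define u where "u = max ta (max tT tV) + \<tau>"
  define k where "k = \<mu> + 2 * a * M / Tmax"
  have kp: "k > 0" using mupos apos M_ge Tmpos by (simp add: k_def add_pos_nonneg)
  have u1: "u \<ge> 1" using ta taupos by (simp add: u_def)
  have "\<forall>t\<ge>u + \<eta>I / (\<phi> / 2). I t \<ge> \<eta>I"
  proof (intro allI impI)
    fix t assume t: "t \<ge> u + \<eta>I / (\<phi> / 2)"
    have "\<eta>I / (\<phi> / 2) \<ge> 0" using etas_pos by simp
    then have tt: "u \<le> t" using t by linarith
    show "I t \<ge> \<eta>I"
    proof (rule reach_above[where x = I and x' = "DI T I V" and u = u and v = t and \<delta> = "\<phi> / 2" and B = 0])
      show "u \<le> t" by fact
      show "continuous_on {u..t} I" using P(5)[of u t] u1 taupos by auto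
      fix r assume r: "u < r" "r < t"
      have r0: "r > 0" using r u1 by simp
      show "(I has_real_derivative DI T I V r) (at r)" using P(3)[of r] r0 by simp
      assume Ir: "I r \<le> \<eta>I"
      have rt: "r - \<tau> \<ge> ta" "r - \<tau> \<ge> tT" "r - \<tau> \<ge> tV" "r \<ge> ta - \<tau>" using r taupos by (auto simp: u_def)
      have pd: "T (r - \<tau>) \<ge> \<eta>T" "V (r - \<tau>) \<ge> \<eta>V" "V (r - \<tau>) \<le> M"
        using tT[OF rt(2)] tV[OF rt(3)] ta(2)[of "r - \<tau>"] rt(1) taupos by auto
      have pr: "T r > 0" "I r > 0" "V r > 0" "T r \<le> M" "I r \<le> M" "V r \<le> M"
        using P(1)[of r] r0 taupos ta(2)[OF rt(4)] by auto
      have fphi: "F T V (r - \<tau>) \<ge> \<phi>" unfolding F_def \<phi>_def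
      proof (rule frac_le)
        show "0 \<le> b * T (r - \<tau>) * V (r - \<tau>)" using pd etas_pos bpos by simp
        have "\<eta>T * \<eta>V \<le> T (r - \<tau>) * V (r - \<tau>)" using pd etas_pos by (intro mult_mono) auto
        then show "b * \<eta>T * \<eta>V \<le> b * T (r - \<tau>) * V (r - \<tau>)" using bpos by (simp add: mult.assoc)
        show "0 < 1 + \<alpha> * V (r - \<tau>)" using pd etas_pos alpos by (smt (verit) mult_pos_pos)
        show "1 + \<alpha> * V (r - \<tau>) \<le> 1 + \<alpha> * M" using pd alpos by simp
      qed
      have "0 + a * I r * (1 - (T r + I r) / Tmax) - \<mu> * I r \<ge> - k * I r"
        unfolding k_def by (rule Ilb_alg) (use apos Tmpos pr in auto)
      moreover have "k * I r \<le> k * \<eta>I" using Ir kp by simp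
      moreover have "\<eta>I = \<phi> / (2 * k)" by (simp add: \<eta>I_def k_def)
      then have "k * \<eta>I = \<phi> / 2" using kp by simp
      ultimately show "DI T I V r \<ge> \<phi> / 2" using fphi unfolding DI_def by linarith
    qed (use etas_pos t P(1)[of u] u1 taupos in \<open>auto simp: max_def\<close>)
  qed
  then show ?thesis by blast
qed

end

lemma liminf_ge:
  fixes x :: "real \<Rightarrow> real"
  shows "(\<forall>t\<ge>t0. x t \<ge> \<eta>) \<Longrightarrow> \<eta>' \<le> \<eta> \<Longrightarrow> Liminf at_top (\<lambda>t. ereal (x t)) \<ge> ereal \<eta>'"
proof (rule Liminf_bounded)
  assume h: "\<forall>t\<ge>t0. x t \<ge> \<eta>" "\<eta>' \<le> \<eta>"
  then have "\<forall>t\<ge>t0. ereal \<eta>' \<le> ereal (x t)" by auto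
  then show "\<forall>\<^sub>F t in at_top. ereal \<eta>' \<le> ereal (x t)"
    unfolding eventually_at_top_linorder by blast
qed

lemma permanent_thm: "permanent s d a Tmax b \<alpha> \<mu> p c \<tau>"
  unfolding permanent_def
proof (intro conjI)
  show "\<exists>M. \<forall>T I V. is_solution s d a Tmax b \<alpha> \<mu> p c \<tau> T I V \<longrightarrow>
         (\<forall>\<^sub>F t in at_top. T t \<le> M \<and> I t \<le> M \<and> V t \<le> M)"
  proof (intro exI allI impI)
    fix T I V assume sol: "is_solution s d a Tmax b \<alpha> \<mu> p c \<tau> T I V"
    obtain ta where "\<forall>t\<ge>ta - \<tau>. T t \<le> M \<and> I t \<le> M \<and> V t \<le> M" using absorb[OF sol] by blast
    then show "\<forall>\<^sub>F t in at_top. T t \<le> M \<and> I t \<le> M \<and> V t \<le> M"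
      unfolding eventually_at_top_linorder by blast
  qed
  show "\<exists>\<eta>>0. \<forall>T I V. is_solution s d a Tmax b \<alpha> \<mu> p c \<tau> T I V \<longrightarrow>
         Liminf at_top (\<lambda>t. ereal (T t)) \<ge> ereal \<eta> \<and>
         Liminf at_top (\<lambda>t. ereal (I t)) \<ge> ereal \<eta> \<and>
         Liminf at_top (\<lambda>t. ereal (V t)) \<ge> ereal \<eta>"
  proof (intro exI[of _ "min \<eta>T (min \<eta>I \<eta>V)"] conjI allI impI)
    show "min \<eta>T (min \<eta>I \<eta>V) > 0" using etas_pos by simp
    fix T I V assume sol: "is_solution s d a Tmax b \<alpha> \<mu> p c \<tau> T I V"
    obtain t1 where 1: "\<forall>t\<ge>t1. T t \<ge> \<eta>T" using T_lower[OF sol] unfolding \<eta>T_def by blast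
    obtain t2 where 2: "\<forall>t\<ge>t2. I t \<ge> \<eta>I" using I_lower[OF sol] by blast
    obtain t3 where 3: "\<forall>t\<ge>t3. V t \<ge> \<eta>V" using V_lower[OF sol] by blast
    show "Liminf at_top (\<lambda>t. ereal (T t)) \<ge> ereal (min \<eta>T (min \<eta>I \<eta>V))"
      by (rule liminf_ge[OF 1]) simp
    show "Liminf at_top (\<lambda>t. ereal (I t)) \<ge> ereal (min \<eta>T (min \<eta>I \<eta>V))"
      by (rule liminf_ge[OF 2]) simp
    show "Liminf at_top (\<lambda>t. ereal (V t)) \<ge> ereal (min \<eta>T (min \<eta>I \<eta>V))"
      by (rule liminf_ge[OF 3]) simp
  qed
qed

end

theorem theorem7:
  fixes s d a Tmax b \<alpha> \<mu> p c \<tau> :: real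
  assumes "s > 0" "d > 0" "a > 0" "Tmax > 0" "b > 0" "\<alpha> > 0" "\<mu> > 0" "p > 0" "c > 0"
    and "d \<le> \<mu>" and "\<tau> \<ge> 0"
    and "R0_of s d a Tmax b \<mu> p c > 1"
  shows "permanent s d a Tmax b \<alpha> \<mu> p c \<tau>"
proof -
  interpret hiv s d a Tmax b \<alpha> \<mu> p c \<tau>
    by unfold_locales (use assms in auto)
  show ?thesis by (rule permanent_thm)
qed


end
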